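(* For every bubble function $\mathbf x_b\in\mathbf V_b$ (identified with its coefficient vector), $$\|B_b\mathbf x_b\|_{M_p^{-1}}\le\frac1\zeta\|\mathbf x_b\|_{A_{bb}}\le\frac1\zeta\|\mathbf x_b\|_{D_{bb}}.$$
   Context: $\Omega\subset\mathbb{R}^d$, $d\in\{2,3\}$, bounded, with a shape-regular simplicial mesh; $\mu>0,\lambda\ge0$ Lamé coefficients, $\zeta=\sqrt{\lambda+2\mu/d}$. $\mathbf V_b$ is the space of edge ($d=2$)/face ($d=3$) bubble functions $b_F\mathbf n_F$ ($b_F$ the product of barycentric coordinates of the vertices of face $F$, $\mathbf n_F$ a unit normal); $Q_h$ piecewise constants with mass matrix $M_p$. $A_{bb}$ is the matrix of $a(\mathbf u,\mathbf v)=2\mu\int_\Omega\varepsilon(\mathbf u):\varepsilon(\mathbf v)+\lambda\int_\Omega\operatorname{div}\mathbf u\operatorname{div}\mathbf v$ on $\mathbf V_b$; $B_b$ is the matrix of $-(\operatorname{div}\mathbf v,q)$ for $\mathbf v\in\mathbf V_b,q\in Q_h$; $D_{bb}=(d+1)\operatorname{diag}(A_{bb})$, which is known to satisfy $\|\mathbf x_b\|_{A_{bb}}\le\|\mathbf x_b\|_{D_{bb}}$. For SPD $H$, $\|\mathbf x\|_H^2=(H\mathbf x,\mathbf x)$. *)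

theory Defs
  imports "HOL-Analysis.Analysis"
begin

text \<open>Simplicial mesh: a finite set of simplices, each given by its vertex set
  (d+1 affinely independent points of R^d); the closed element is its convex hull.\<close>

definition simplicial_mesh :: "(real^'d) set set \<Rightarrow> bool" where
  "simplicial_mesh Th \<longleftrightarrow> finite Th \<and> Th \<noteq> {} \<and>
     (\<forall>T\<in>Th. card T = CARD('d) + 1 \<and> \<not> affine_dependent T) \<and>
     (\<forall>T\<in>Th. \<forall>T'\<in>Th. convex hull T \<inter> convex hull T' = convex hull (T \<inter> T'))"

definition domain :: "(real^'d) set set \<Rightarrow> (real^'d) set" where
  "domain Th = (\<Union>T\<in>Th. convex hull T)"

definition mesh_faces :: "(real^'d) set set \<Rightarrow> (real^'d) set set" where
  "mesh_faces Th = {F. \<exists>T\<in>Th. F \<subseteq> T \<and> card F = CARD('d)}"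

definition bary :: "(real^'d) set \<Rightarrow> real^'d \<Rightarrow> real^'d \<Rightarrow> real" where
  "bary T x p = (SOME c. sum c T = 1 \<and> (\<Sum>q\<in>T. c q *\<^sub>R q) = x) p"

definition bubble :: "(real^'d) set set \<Rightarrow> (real^'d) set \<Rightarrow> real^'d \<Rightarrow> real" where
  "bubble Th F x =
     (if \<exists>T\<in>Th. F \<subseteq> T \<and> x \<in> convex hull T
      then (\<Prod>p\<in>F. bary (SOME T. T \<in> Th \<and> F \<subseteq> T \<and> x \<in> convex hull T) x p)
      else 0)"

definition bubble_vec :: "(real^'d) set set \<Rightarrow> ((real^'d) set \<Rightarrow> real^'d) \<Rightarrow> (real^'d) set \<Rightarrow> real^'d \<Rightarrow> real^'d" where
  "bubble_vec Th nF F = (\<lambda>y. bubble Th F y *\<^sub>R nF F)"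

definition bubble_fun :: "(real^'d) set set \<Rightarrow> ((real^'d) set \<Rightarrow> real^'d) \<Rightarrow> (real^'d) set set
    \<Rightarrow> ((real^'d) set \<Rightarrow> real) \<Rightarrow> real^'d \<Rightarrow> real^'d" where
  "bubble_fun Th nF Fs xb = (\<lambda>y. \<Sum>F\<in>Fs. xb F *\<^sub>R bubble_vec Th nF F y)"

definition grad :: "(real^'d \<Rightarrow> real^'d) \<Rightarrow> real^'d \<Rightarrow> real^'d^'d" where
  "grad v x = matrix (frechet_derivative v (at x))"

definition strain :: "(real^'d \<Rightarrow> real^'d) \<Rightarrow> real^'d \<Rightarrow> real^'d^'d" where
  "strain v x = (\<chi> i j. (grad v x $ i $ j + grad v x $ j $ i) / 2)"

definition divg :: "(real^'d \<Rightarrow> real^'d) \<Rightarrow> real^'d \<Rightarrow> real" where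
  "divg v x = trace (grad v x)"

definition ddot :: "real^'d^'d \<Rightarrow> real^'d^'d \<Rightarrow> real" where
  "ddot A B = (\<Sum>i\<in>UNIV. \<Sum>j\<in>UNIV. A $ i $ j * B $ i $ j)"

definition aform :: "real \<Rightarrow> real \<Rightarrow> (real^'d) set \<Rightarrow> (real^'d \<Rightarrow> real^'d) \<Rightarrow> (real^'d \<Rightarrow> real^'d) \<Rightarrow> real" where
  "aform mu lam Om u v =
     2 * mu * integral Om (\<lambda>x. ddot (strain u x) (strain v x))
     + lam * integral Om (\<lambda>x. divg u x * divg v x)"

definition Abb :: "real \<Rightarrow> real \<Rightarrow> (real^'d) set set \<Rightarrow> ((real^'d) set \<Rightarrow> real^'d)
    \<Rightarrow> (real^'d) set \<Rightarrow> (real^'d) set \<Rightarrow> real" where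
  "Abb mu lam Th nF F G = aform mu lam (domain Th) (bubble_vec Th nF G) (bubble_vec Th nF F)"

text \<open>B_b: rows indexed by elements T (basis of Q_h = indicator of element T),
  columns by faces F: entry  -(div (b_F n_F), 1_T).\<close>
definition Bb :: "(real^'d) set set \<Rightarrow> ((real^'d) set \<Rightarrow> real^'d)
    \<Rightarrow> (real^'d) set \<Rightarrow> (real^'d) set \<Rightarrow> real" where
  "Bb Th nF T F = - integral (domain Th)
       (\<lambda>y. divg (bubble_vec Th nF F) y * indicator (convex hull T) y)"

text \<open>Mass matrix of Q_h: diagonal with entries |T|; its inverse.\<close>
definition Mp :: "(real^'d) set \<Rightarrow> (real^'d) set \<Rightarrow> real" where
  "Mp T T' = (if T = T' then measure lebesgue (convex hull T) else 0)"

definition Mp_inv :: "(real^'d) set \<Rightarrow> (real^'d) set \<Rightarrow> real" where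
  "Mp_inv T T' = (if T = T' then 1 / measure lebesgue (convex hull T) else 0)"

definition Dbb :: "real \<Rightarrow> real \<Rightarrow> (real^'d) set set \<Rightarrow> ((real^'d) set \<Rightarrow> real^'d)
    \<Rightarrow> (real^'d) set \<Rightarrow> (real^'d) set \<Rightarrow> real" where
  "Dbb mu lam Th nF F G =
     (if F = G then (real CARD('d) + 1) * Abb mu lam Th nF F F else 0)"

definition matvec :: "('i \<Rightarrow> 'j \<Rightarrow> real) \<Rightarrow> 'j set \<Rightarrow> ('j \<Rightarrow> real) \<Rightarrow> 'i \<Rightarrow> real" where
  "matvec H J x = (\<lambda>i. \<Sum>j\<in>J. H i j * x j)"

definition hnorm :: "('i \<Rightarrow> 'i \<Rightarrow> real) \<Rightarrow> 'i set \<Rightarrow> ('i \<Rightarrow> real) \<Rightarrow> real" where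
  "hnorm H I x = sqrt (\<Sum>i\<in>I. matvec H I x i * x i)"

end

theory Submission
  imports Defs
begin


lemma mesh_elem:
  fixes Th :: "(real^'d) set set"
  assumes "simplicial_mesh Th" "T \<in> Th"
  shows "finite T" "card T = CARD('d) + 1" "\<not> affine_dependent T"
proof -
  have c: "card T = CARD('d) + 1" "\<not> affine_dependent T"
    using assms unfolding simplicial_mesh_def by auto
  then show "card T = CARD('d) + 1" "\<not> affine_dependent T" by auto
  show "finite T" using c(1) card.infinite by fastforce
qed

lemma bary_exists:
  fixes T :: "(real^'d) set"
  assumes "finite T" "card T = CARD('d) + 1" "\<not> affine_dependent T"
  shows "\<exists>c. sum c T = 1 \<and> (\<Sum>q\<in>T. c q *\<^sub>R q) = x"
proof -
  have "of_nat (card T) = aff_dim T + 1" using aff_dim_affine_independent[OF assms(3)] .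
  then have "aff_dim T = int DIM(real^'d)" using assms(2) by simp
  then have "affine hull T = UNIV" using aff_dim_eq_full by blast
  then have "x \<in> affine hull T" by simp
  then show ?thesis using affine_hull_finite[OF assms(1)] by auto
qed

lemma bary_rep:
  fixes T :: "(real^'d) set"
  assumes "finite T" "card T = CARD('d) + 1" "\<not> affine_dependent T"
  shows "sum (\<lambda>p. bary T x p) T = 1 \<and> (\<Sum>q\<in>T. bary T x q *\<^sub>R q) = x"
proof -
  have "\<exists>c. sum c T = 1 \<and> (\<Sum>q\<in>T. c q *\<^sub>R q) = x" using bary_exists[OF assms] .
  from someI_ex[OF this] show ?thesis unfolding bary_def by simp
qed

lemma bary_unique:
  fixes T :: "(real^'d) set"
  assumes "finite T" "card T = CARD('d) + 1" "\<not> affine_dependent T"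
    and c: "sum c T = 1" "(\<Sum>q\<in>T. c q *\<^sub>R q) = x" and p: "p \<in> T"
  shows "bary T x p = c p"
proof -
  let ?u = "\<lambda>q. bary T x q - c q"
  have r: "sum (\<lambda>p. bary T x p) T = 1" "(\<Sum>q\<in>T. bary T x q *\<^sub>R q) = x"
    using bary_rep[OF assms(1-3)] by auto
  have "sum ?u T = 0" using r c by (simp add: sum_subtractf)
  moreover have "(\<Sum>q\<in>T. ?u q *\<^sub>R q) = 0" using r c
    by (simp add: scaleR_diff_left sum_subtractf)
  ultimately have "\<forall>v\<in>T. ?u v = 0"
    using assms(3) affine_dependent_explicit_finite[OF assms(1)] by blast
  then show ?thesis using p by simp
qed

definition Lb :: "(real^'d) set \<Rightarrow> real^'d \<Rightarrow> real^'d \<Rightarrow> real" where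
  "Lb T p h = bary T h p - bary T 0 p"

lemma bary_add:
  fixes T :: "(real^'d) set"
  assumes "finite T" "card T = CARD('d) + 1" "\<not> affine_dependent T" "p \<in> T"
  shows "bary T (x + y) p = bary T x p + bary T y p - bary T 0 p"
proof -
  have rx: "sum (\<lambda>p. bary T x p) T = 1" "(\<Sum>q\<in>T. bary T x q *\<^sub>R q) = x"
    and ry: "sum (\<lambda>p. bary T y p) T = 1" "(\<Sum>q\<in>T. bary T y q *\<^sub>R q) = y"
    and r0: "sum (\<lambda>p. bary T 0 p) T = 1" "(\<Sum>q\<in>T. bary T 0 q *\<^sub>R q) = 0"
    using bary_rep[OF assms(1-3)] by auto
  show ?thesis
  proof (rule bary_unique[OF assms(1-3)])
    show "(\<Sum>q\<in>T. bary T x q + bary T y q - bary T 0 q) = 1"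
      using rx ry r0 by (simp add: sum.distrib sum_subtractf)
    show "(\<Sum>q\<in>T. (bary T x q + bary T y q - bary T 0 q) *\<^sub>R q) = x + y"
      using rx ry r0 by (simp add: scaleR_add_left scaleR_diff_left sum.distrib sum_subtractf)
  qed (rule assms)
qed

lemma bary_scale:
  fixes T :: "(real^'d) set"
  assumes "finite T" "card T = CARD('d) + 1" "\<not> affine_dependent T" "p \<in> T"
  shows "bary T (s *\<^sub>R x) p = s * bary T x p + (1 - s) * bary T 0 p"
proof -
  have rx: "sum (\<lambda>p. bary T x p) T = 1" "(\<Sum>q\<in>T. bary T x q *\<^sub>R q) = x"
    and r0: "sum (\<lambda>p. bary T 0 p) T = 1" "(\<Sum>q\<in>T. bary T 0 q *\<^sub>R q) = 0"
    using bary_rep[OF assms(1-3)] by auto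
  show ?thesis
  proof (rule bary_unique[OF assms(1-3)])
    show "(\<Sum>q\<in>T. s * bary T x q + (1 - s) * bary T 0 q) = 1"
      using rx r0 by (simp add: sum.distrib flip: sum_distrib_left)
    show "(\<Sum>q\<in>T. (s * bary T x q + (1 - s) * bary T 0 q) *\<^sub>R q) = s *\<^sub>R x"
      using rx r0 by (simp add: scaleR_add_left sum.distrib flip: scaleR_scaleR scaleR_right.sum)
  qed (rule assms)
qed

lemma Lb_linear:
  fixes T :: "(real^'d) set"
  assumes "finite T" "card T = CARD('d) + 1" "\<not> affine_dependent T" "p \<in> T"
  shows "linear (Lb T p)"
proof (rule linearI)
  fix x y :: "real^'d" and s :: real
  show "Lb T p (x + y) = Lb T p x + Lb T p y"
    unfolding Lb_def using bary_add[OF assms] by simp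
  show "Lb T p (s *\<^sub>R x) = s *\<^sub>R Lb T p x"
    unfolding Lb_def using bary_scale[OF assms] by (simp add: algebra_simps)
qed

lemma bary_eq_Lb:
  "bary T x p = bary T 0 p + Lb T p x"
  unfolding Lb_def by simp

lemma bary_deriv:
  fixes T :: "(real^'d) set"
  assumes "finite T" "card T = CARD('d) + 1" "\<not> affine_dependent T" "p \<in> T"
  shows "((\<lambda>x. bary T x p) has_derivative Lb T p) (at y)"
proof -
  have bl: "bounded_linear (Lb T p)"
    using Lb_linear[OF assms] linear_conv_bounded_linear by blast
  have "((\<lambda>x. bary T 0 p + Lb T p x) has_derivative (\<lambda>h. 0 + Lb T p h)) (at y)"
    by (intro derivative_intros bounded_linear.has_derivative[OF bl])
  then show ?thesis by (simp add: bary_eq_Lb[symmetric] del: Lb_def)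
qed

lemma bary_cont:
  fixes T :: "(real^'d) set"
  assumes "finite T" "card T = CARD('d) + 1" "\<not> affine_dependent T" "p \<in> T"
  shows "continuous_on UNIV (\<lambda>x. bary T x p)"
  using bary_deriv[OF assms] has_derivative_continuous
  by (meson continuous_at_imp_continuous_on)



definition psi :: "(real^'d) set \<Rightarrow> ((real^'d) set \<Rightarrow> real^'d) \<Rightarrow> (real^'d) set \<Rightarrow> real^'d \<Rightarrow> real^'d" where
  "psi T nF F z = (if F \<subseteq> T then \<Prod>p\<in>F. bary T z p else 0) *\<^sub>R nF F"

definition Dpsi :: "(real^'d) set \<Rightarrow> ((real^'d) set \<Rightarrow> real^'d) \<Rightarrow> (real^'d) set \<Rightarrow> real^'d \<Rightarrow> real^'d \<Rightarrow> real^'d" where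
  "Dpsi T nF F z h = (if F \<subseteq> T then \<Sum>p\<in>F. Lb T p h * (\<Prod>q\<in>F-{p}. bary T z q) else 0) *\<^sub>R nF F"

definition Phi :: "(real^'d) set \<Rightarrow> ((real^'d) set \<Rightarrow> real^'d) \<Rightarrow> (real^'d) set \<Rightarrow> real^'d \<Rightarrow> real^'d^'d" where
  "Phi T nF F z = matrix (Dpsi T nF F z)"

lemma psi_deriv:
  fixes T :: "(real^'d) set"
  assumes "finite T" "card T = CARD('d) + 1" "\<not> affine_dependent T"
  shows "(psi T nF F has_derivative Dpsi T nF F z) (at z)"
proof (cases "F \<subseteq> T")
  case True
  have "((\<lambda>x. \<Prod>p\<in>F. bary T x p) has_derivative
          (\<lambda>h. \<Sum>p\<in>F. Lb T p h * (\<Prod>q\<in>F-{p}. bary T z q))) (at z)"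
    using True by (intro has_derivative_prod bary_deriv[OF assms]) auto
  then have "((\<lambda>x. (\<Prod>p\<in>F. bary T x p) *\<^sub>R nF F) has_derivative
          (\<lambda>h. (\<Sum>p\<in>F. Lb T p h * (\<Prod>q\<in>F-{p}. bary T z q)) *\<^sub>R nF F)) (at z)"
    by (rule has_derivative_scaleR_left)
  then show ?thesis using True unfolding psi_def Dpsi_def by simp
next
  case False
  have "psi T nF F = (\<lambda>x. 0)" "Dpsi T nF F z = (\<lambda>h. 0)"
    using False unfolding psi_def Dpsi_def by (auto simp: fun_eq_iff)
  then show ?thesis by simp
qed

lemma Phi_entry:
  "Phi T nF F z $ i $ j =
     (if F \<subseteq> T then \<Sum>p\<in>F. Lb T p (axis j 1) * (\<Prod>q\<in>F-{p}. bary T z q) else 0) * nF F $ i"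
  unfolding Phi_def matrix_def Dpsi_def by simp

lemma Phi_cont:
  fixes T :: "(real^'d) set"
  assumes "finite T" "card T = CARD('d) + 1" "\<not> affine_dependent T"
  shows "continuous_on UNIV (\<lambda>z. Phi T nF F z)"
proof (cases "F \<subseteq> T")
  case True
  have "continuous_on UNIV (\<lambda>z. \<chi> i j. (\<Sum>p\<in>F. Lb T p (axis j 1) * (\<Prod>q\<in>F-{p}. bary T z q)) * nF F $ i)"
    using True
    by (intro continuous_on_vec_lambda continuous_intros bary_cont[OF assms]) auto
  moreover have "(\<lambda>z. Phi T nF F z) = (\<lambda>z. \<chi> i j. (\<Sum>p\<in>F. Lb T p (axis j 1) * (\<Prod>q\<in>F-{p}. bary T z q)) * nF F $ i)"
    using True by (auto simp: fun_eq_iff vec_eq_iff Phi_entry)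
  ultimately show ?thesis by simp
next
  case False
  have "(\<lambda>z. Phi T nF F z) = (\<lambda>z. 0)"
    using False by (auto simp: fun_eq_iff vec_eq_iff Phi_entry)
  then show ?thesis by simp
qed

definition Nint :: "(real^'d) set set \<Rightarrow> (real^'d) set" where
  "Nint Th = (\<Union>T\<in>Th. \<Union>T'\<in>Th - {T}. convex hull (T \<inter> T'))"

definition Nbad :: "(real^'d) set set \<Rightarrow> (real^'d) set" where
  "Nbad Th = (\<Union>T\<in>Th. frontier (convex hull T)) \<union> Nint Th"

lemma Nint_closed:
  fixes Th :: "(real^'d) set set"
  assumes "simplicial_mesh Th"
  shows "closed (Nint Th)"
proof -
  have fin: "finite Th" using assms unfolding simplicial_mesh_def by auto
  have "closed (convex hull (T \<inter> T'))" if "T \<in> Th" for T T'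
    using mesh_elem(1)[OF assms that]
    by (intro compact_imp_closed compact_convex_hull finite_imp_compact) auto
  then show ?thesis unfolding Nint_def using fin
    by (intro closed_UN) auto
qed

lemma Nint_neg:
  fixes Th :: "(real^'d) set set"
  assumes "simplicial_mesh Th" "T \<in> Th" "T' \<in> Th" "T \<noteq> T'"
  shows "negligible (convex hull (T \<inter> T'))"
proof -
  note e = mesh_elem[OF assms(1,2)] and e' = mesh_elem[OF assms(1,3)]
  have "card (T \<inter> T') < card T"
  proof (rule psubset_card_mono[OF e(1)])
    show "T \<inter> T' \<subset> T"
    proof
      show "T \<inter> T' \<subseteq> T" by auto
      show "T \<inter> T' \<noteq> T"
      proof
        assume "T \<inter> T' = T"
        then have "T \<subseteq> T'" by auto
        then have "T = T'" using card_subset_eq[OF e'(1)] e(2) e'(2) by auto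
        then show False using assms(4) by simp
      qed
    qed
  qed
  then have c: "card (T \<inter> T') \<le> CARD('d)" using e(2) by simp
  have "aff_dim (T \<inter> T') \<le> int (card (T \<inter> T')) - 1"
    using aff_dim_le_card[of "T \<inter> T'"] e(1) by auto
  then have "aff_dim (convex hull (T \<inter> T')) \<noteq> int DIM(real^'d)"
    using c by (simp add: aff_dim_convex_hull)
  then have "interior (convex hull (T \<inter> T')) = {}" by (rule low_dim_interior)
  moreover have "closed (convex hull (T \<inter> T'))"
    using e(1) by (intro compact_imp_closed compact_convex_hull finite_imp_compact) auto
  ultimately have "frontier (convex hull (T \<inter> T')) = convex hull (T \<inter> T')"
    by (simp add: frontier_def closure_closed)
  then show ?thesis using negligible_convex_frontier[OF convex_convex_hull]
    by metis
qed

lemma Nbad_neg: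
  fixes Th :: "(real^'d) set set"
  assumes "simplicial_mesh Th"
  shows "negligible (Nbad Th)"
proof -
  have fin: "finite Th" using assms unfolding simplicial_mesh_def by auto
  have "negligible (\<Union>T\<in>Th. frontier (convex hull T))"
    using fin by (intro negligible_Union) (auto intro: negligible_convex_frontier)
  moreover have "negligible (Nint Th)" unfolding Nint_def using fin
    by (intro negligible_Union) (auto intro: Nint_neg[OF assms])
  ultimately show ?thesis unfolding Nbad_def by auto
qed

lemma elem_unique:
  fixes Th :: "(real^'d) set set"
  assumes "simplicial_mesh Th" "T \<in> Th" "y \<in> convex hull T" "y \<notin> Nint Th"
    "T' \<in> Th" "y \<in> convex hull T'"
  shows "T' = T"
proof (rule ccontr)
  assume ne: "T' \<noteq> T"
  have "convex hull T \<inter> convex hull T' = convex hull (T \<inter> T')"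
    using assms(1,2,5) unfolding simplicial_mesh_def by blast
  then have "y \<in> convex hull (T \<inter> T')" using assms(3,6) by auto
  then have "y \<in> Nint Th" unfolding Nint_def using assms(2,5) ne by blast
  then show False using assms(4) by simp
qed

lemma grad_bubble:
  fixes Th :: "(real^'d) set set"
  assumes mesh: "simplicial_mesh Th" and T: "T \<in> Th" and y: "y \<in> convex hull T" "y \<notin> Nbad Th"
  shows "grad (bubble_vec Th nF F) y = Phi T nF F y"
proof -
  note e = mesh_elem[OF mesh T]
  define U where "U = interior (convex hull T) - Nint Th"
  have "open U" unfolding U_def using Nint_closed[OF mesh] by auto
  have cl: "closed (convex hull T)"
    using e(1) by (intro compact_imp_closed compact_convex_hull finite_imp_compact) auto
  have "y \<notin> frontier (convex hull T)" using y(2) T unfolding Nbad_def by auto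
  then have "y \<in> interior (convex hull T)" using y(1) cl
    by (simp add: frontier_def closure_closed)
  then have "y \<in> U" using y(2) unfolding U_def Nbad_def by auto
  have eq: "bubble_vec Th nF F z = psi T nF F z" if "z \<in> U" for z
  proof -
    have zT: "z \<in> convex hull T" "z \<notin> Nint Th" using that interior_subset unfolding U_def by auto
    have un: "\<And>T'. T' \<in> Th \<Longrightarrow> z \<in> convex hull T' \<Longrightarrow> T' = T"
      using elem_unique[OF mesh T zT] by blast
    show ?thesis
    proof (cases "F \<subseteq> T")
      case True
      have ex: "\<exists>T'. T' \<in> Th \<and> F \<subseteq> T' \<and> z \<in> convex hull T'" using True T zT by blast
      have "(SOME T'. T' \<in> Th \<and> F \<subseteq> T' \<and> z \<in> convex hull T') = T"
        using someI_ex[OF ex] un by blast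
      then show ?thesis using True ex unfolding bubble_vec_def bubble_def psi_def by auto
    next
      case False
      then have "\<not> (\<exists>T'\<in>Th. F \<subseteq> T' \<and> z \<in> convex hull T')" using un by blast
      then show ?thesis using False unfolding bubble_vec_def bubble_def psi_def by auto
    qed
  qed
  have "(bubble_vec Th nF F has_derivative Dpsi T nF F y) (at y)"
    by (rule has_derivative_transform_within_open[OF psi_deriv[OF e] \<open>open U\<close> \<open>y \<in> U\<close>])
       (use eq in auto)
  then have "frechet_derivative (bubble_vec Th nF F) (at y) = Dpsi T nF F y"
    using frechet_derivative_at by metis
  then show ?thesis unfolding grad_def Phi_def by simp
qed



lemma cont_integrable:
  fixes f :: "real^'d \<Rightarrow> real" and T :: "(real^'d) set"
  assumes "finite T" "continuous_on UNIV f"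
  shows "f integrable_on convex hull T"
proof -
  have c: "compact (convex hull T)" using assms(1) by (intro compact_convex_hull finite_imp_compact)
  have "integrable lborel (\<lambda>x. indicat_real (convex hull T) x *\<^sub>R f x)"
    by (rule borel_integrable_compact[OF c continuous_on_subset[OF assms(2)]]) auto
  then have "(\<lambda>x. indicat_real (convex hull T) x *\<^sub>R f x) integrable_on UNIV"
    by (rule integrable_on_lborel)
  moreover have "(\<lambda>x. indicat_real (convex hull T) x *\<^sub>R f x) = (\<lambda>x. if x \<in> convex hull T then f x else 0)"
    by (auto simp: indicator_def)
  ultimately show ?thesis using Henstock_Kurzweil_Integration.integrable_restrict_UNIV[of "convex hull T" f] by simp
qed

lemma int_decomp:
  fixes Th :: "(real^'d) set set" and g :: "real^'d \<Rightarrow> real"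
  assumes mesh: "simplicial_mesh Th"
    and hc: "\<And>T. T \<in> Th \<Longrightarrow> continuous_on UNIV (h T)"
    and gh: "\<And>T y. T \<in> Th \<Longrightarrow> y \<in> convex hull T \<Longrightarrow> y \<notin> Nbad Th \<Longrightarrow> g y = h T y"
  shows "(g has_integral (\<Sum>T\<in>Th. integral (convex hull T) (h T))) (domain Th)"
proof -
  have fin: "finite Th" using mesh unfolding simplicial_mesh_def by auto
  have each: "((\<lambda>y. if y \<in> convex hull T then h T y else 0) has_integral integral (convex hull T) (h T)) UNIV"
    if "T \<in> Th" for T
  proof -
    have "h T integrable_on convex hull T"
      using cont_integrable[OF mesh_elem(1)[OF mesh that] hc[OF that]] .
    then have "(h T has_integral integral (convex hull T) (h T)) (convex hull T)"
      by (rule integrable_integral)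
    then show ?thesis by (subst has_integral_restrict_UNIV)
  qed
  have S: "((\<lambda>y. \<Sum>T\<in>Th. if y \<in> convex hull T then h T y else 0) has_integral
           (\<Sum>T\<in>Th. integral (convex hull T) (h T))) UNIV"
    by (rule has_integral_sum[OF fin each])
  have "((\<lambda>y. if y \<in> domain Th then g y else 0) has_integral
           (\<Sum>T\<in>Th. integral (convex hull T) (h T))) UNIV"
  proof (rule has_integral_spike[OF Nbad_neg[OF mesh] _ S])
    fix y assume y: "y \<in> UNIV - Nbad Th"
    show "(if y \<in> domain Th then g y else 0) = (\<Sum>T\<in>Th. if y \<in> convex hull T then h T y else 0)"
    proof (cases "y \<in> domain Th")
      case True
      then obtain T where T: "T \<in> Th" "y \<in> convex hull T" unfolding domain_def by auto
      have yN: "y \<notin> Nint Th" using y unfolding Nbad_def by auto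
      have "(\<Sum>T'\<in>Th. if y \<in> convex hull T' then h T' y else 0)
            = (\<Sum>T'\<in>Th. if T' = T then h T y else 0)"
      proof (rule sum.cong[OF refl])
        fix T' assume T': "T' \<in> Th"
        show "(if y \<in> convex hull T' then h T' y else 0) = (if T' = T then h T y else 0)"
        proof (cases "T' = T")
          case True then show ?thesis using T by simp
        next
          case False
          then have "y \<notin> convex hull T'" using elem_unique[OF mesh T yN T'] by blast
          then show ?thesis using False by simp
        qed
      qed
      also have "\<dots> = h T y" using fin T by (simp add: sum.delta)
      finally have "(\<Sum>T'\<in>Th. if y \<in> convex hull T' then h T' y else 0) = h T y" .
      moreover have "g y = h T y" using gh[OF T] y by blast
      ultimately show ?thesis using True by simp
    next
      case False
      then have "\<forall>T\<in>Th. y \<notin> convex hull T" unfolding domain_def by auto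
      then have "(\<Sum>T\<in>Th. if y \<in> convex hull T then h T y else 0) = 0"
        by (intro sum.neutral) auto
      then show ?thesis using False by simp
    qed
  qed
  then show ?thesis by (subst (asm) has_integral_restrict_UNIV)
qed



definition symm :: "real^'d^'d \<Rightarrow> real^'d^'d" where
  "symm M = (\<chi> i j. (M $ i $ j + M $ j $ i) / 2)"

definition bform :: "real \<Rightarrow> real \<Rightarrow> real^'d^'d \<Rightarrow> real^'d^'d \<Rightarrow> real" where
  "bform mu lam M N = 2 * mu * ddot (symm M) (symm N) + lam * (trace M * trace N)"

lemma strain_eq: "strain v x = symm (grad v x)"
  unfolding strain_def symm_def by simp

lemma cont_ddot:
  fixes A B :: "real^'d \<Rightarrow> real^'d^'d"
  assumes "continuous_on S A" "continuous_on S B"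
  shows "continuous_on S (\<lambda>y. ddot (symm (A y)) (symm (B y)))"
  unfolding ddot_def symm_def using assms
  by (simp, intro continuous_intros) auto

lemma cont_tr:
  fixes A B :: "real^'d \<Rightarrow> real^'d^'d"
  assumes "continuous_on S A" "continuous_on S B"
  shows "continuous_on S (\<lambda>y. trace (A y) * trace (B y))"
  unfolding trace_def using assms
  by (intro continuous_intros) auto

lemma cont_trace:
  fixes A :: "real^'d \<Rightarrow> real^'d^'d"
  assumes "continuous_on S A"
  shows "continuous_on S (\<lambda>y. trace (A y))"
  unfolding trace_def using assms
  by (intro continuous_intros) auto

lemma cont_bform:
  fixes A B :: "real^'d \<Rightarrow> real^'d^'d"
  assumes "continuous_on S A" "continuous_on S B"
  shows "continuous_on S (\<lambda>y. bform mu lam (A y) (B y))"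
  unfolding bform_def using cont_ddot[OF assms] cont_trace[OF assms(1)] cont_trace[OF assms(2)]
  by (intro continuous_intros) auto

lemma Abb_decomp:
  fixes Th :: "(real^'d) set set"
  assumes mesh: "simplicial_mesh Th"
  shows "Abb mu lam Th nF F G =
    (\<Sum>T\<in>Th. integral (convex hull T) (\<lambda>y. bform mu lam (Phi T nF G y) (Phi T nF F y)))"
proof -
  have fin: "finite Th" using mesh unfolding simplicial_mesh_def by auto
  have c: "continuous_on UNIV (Phi T nF F)" "continuous_on UNIV (Phi T nF G)" if "T \<in> Th" for T
    using Phi_cont[OF mesh_elem[OF mesh that]] by auto
  have i1: "((\<lambda>x. ddot (strain (bubble_vec Th nF G) x) (strain (bubble_vec Th nF F) x)) has_integral
     (\<Sum>T\<in>Th. integral (convex hull T) (\<lambda>y. ddot (symm (Phi T nF G y)) (symm (Phi T nF F y))))) (domain Th)"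
  proof (rule int_decomp[OF mesh])
    fix T assume "T \<in> Th"
    show "continuous_on UNIV (\<lambda>y. ddot (symm (Phi T nF G y)) (symm (Phi T nF F y)))"
      using cont_ddot[OF c(2,1)[OF \<open>T \<in> Th\<close>]] .
  next
    fix T y assume "T \<in> Th" "y \<in> convex hull T" "y \<notin> Nbad Th"
    then show "ddot (strain (bubble_vec Th nF G) y) (strain (bubble_vec Th nF F) y) =
          ddot (symm (Phi T nF G y)) (symm (Phi T nF F y))"
      by (simp add: strain_eq grad_bubble[OF mesh])
  qed
  have i2: "((\<lambda>x. divg (bubble_vec Th nF G) x * divg (bubble_vec Th nF F) x) has_integral
     (\<Sum>T\<in>Th. integral (convex hull T) (\<lambda>y. trace (Phi T nF G y) * trace (Phi T nF F y)))) (domain Th)"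
  proof (rule int_decomp[OF mesh])
    fix T assume "T \<in> Th"
    show "continuous_on UNIV (\<lambda>y. trace (Phi T nF G y) * trace (Phi T nF F y))"
      using cont_tr[OF c(2,1)[OF \<open>T \<in> Th\<close>]] .
  next
    fix T y assume "T \<in> Th" "y \<in> convex hull T" "y \<notin> Nbad Th"
    then show "divg (bubble_vec Th nF G) y * divg (bubble_vec Th nF F) y =
          trace (Phi T nF G y) * trace (Phi T nF F y)"
      by (simp add: divg_def grad_bubble[OF mesh])
  qed
  have el: "integral (convex hull T) (\<lambda>y. bform mu lam (Phi T nF G y) (Phi T nF F y)) =
      2 * mu * integral (convex hull T) (\<lambda>y. ddot (symm (Phi T nF G y)) (symm (Phi T nF F y)))
      + lam * integral (convex hull T) (\<lambda>y. trace (Phi T nF G y) * trace (Phi T nF F y))"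
    if "T \<in> Th" for T
  proof -
    note fT = mesh_elem(1)[OF mesh that]
    have a: "(\<lambda>y. ddot (symm (Phi T nF G y)) (symm (Phi T nF F y))) integrable_on convex hull T"
      by (rule cont_integrable[OF fT cont_ddot[OF c(2,1)[OF that]]])
    have b: "(\<lambda>y. trace (Phi T nF G y) * trace (Phi T nF F y)) integrable_on convex hull T"
      by (rule cont_integrable[OF fT cont_tr[OF c(2,1)[OF that]]])
    show ?thesis unfolding bform_def
      using integral_add[OF integrable_cmul[OF a, of "2*mu"] integrable_cmul[OF b, of lam]]
      by (simp add: integral_mult_right)
  qed
  show ?thesis
    unfolding Abb_def aform_def integral_unique[OF i1] integral_unique[OF i2]
    by (simp add: el sum.distrib sum_distrib_left)
qed

lemma Bb_decomp:
  fixes Th :: "(real^'d) set set"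
  assumes mesh: "simplicial_mesh Th" and T0: "T0 \<in> Th"
  shows "Bb Th nF T0 F = - integral (convex hull T0) (\<lambda>y. trace (Phi T0 nF F y))"
proof -
  have fin: "finite Th" using mesh unfolding simplicial_mesh_def by auto
  have i: "((\<lambda>y. divg (bubble_vec Th nF F) y * indicator (convex hull T0) y) has_integral
     (\<Sum>T\<in>Th. integral (convex hull T) (\<lambda>y. (if T = T0 then 1 else 0) * trace (Phi T nF F y)))) (domain Th)"
  proof (rule int_decomp[OF mesh])
    fix T assume "T \<in> Th"
    show "continuous_on UNIV (\<lambda>y. (if T = T0 then 1 else 0) * trace (Phi T nF F y))"
      using cont_trace[OF Phi_cont[OF mesh_elem[OF mesh \<open>T \<in> Th\<close>]]]
      by (intro continuous_intros)
  next
    fix T y assume T: "T \<in> Th" "y \<in> convex hull T" and y: "y \<notin> Nbad Th"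
    have yN: "y \<notin> Nint Th" using y unfolding Nbad_def by auto
    have ind: "indicator (convex hull T0) y = (if T = T0 then 1 else (0::real))"
    proof (cases "T = T0")
      case True then show ?thesis using T by simp
    next
      case False
      then have "y \<notin> convex hull T0" using elem_unique[OF mesh T yN T0] by blast
      then show ?thesis using False by simp
    qed
    show "divg (bubble_vec Th nF F) y * indicator (convex hull T0) y =
          (if T = T0 then 1 else 0) * trace (Phi T nF F y)"
      unfolding ind divg_def grad_bubble[OF mesh T y] by simp
  qed
  have "(\<Sum>T\<in>Th. integral (convex hull T) (\<lambda>y. (if T = T0 then 1 else 0) * trace (Phi T nF F y)))
      = (\<Sum>T\<in>Th. if T = T0 then integral (convex hull T0) (\<lambda>y. trace (Phi T0 nF F y)) else 0)"
    by (intro sum.cong) (auto simp: integral_mult_right)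
  also have "\<dots> = integral (convex hull T0) (\<lambda>y. trace (Phi T0 nF F y))"
    using fin T0 by (simp add: sum.delta)
  finally show ?thesis unfolding Bb_def integral_unique[OF i] by simp
qed



lemma symm_add: "symm (A + B) $ a $ b = symm A $ a $ b + symm B $ a $ b"
  unfolding symm_def by (simp add: add_divide_distrib)
lemma symm_scale: "symm (c *\<^sub>R A) $ a $ b = c * symm A $ a $ b"
  unfolding symm_def by (simp add: algebra_simps)
lemma symm_sum: "symm (\<Sum>i\<in>I. A i) $ a $ b = (\<Sum>i\<in>I. symm (A i) $ a $ b)"
  unfolding symm_def by (simp add: sum.distrib flip: sum_divide_distrib)
lemma trace_add': "trace (A + B) = trace A + trace B"
  unfolding trace_def by (simp add: sum.distrib)
lemma trace_scale: "trace (c *\<^sub>R A) = c * trace A"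
  unfolding trace_def by (simp add: sum_distrib_left)
lemma trace_sum: "trace (\<Sum>i\<in>I. A i) = (\<Sum>i\<in>I. trace (A i))"
  unfolding trace_def by (simp add: sum.swap[of _ UNIV])

lemma bform_bilinear: "bilinear (bform mu lam)"
  unfolding bilinear_def linear_iff bform_def ddot_def
  by (simp add: symm_add symm_scale trace_add' trace_scale algebra_simps sum.distrib sum_distrib_left)



lemma ddot_self: "ddot (symm M) (symm M) = (\<Sum>a\<in>UNIV. \<Sum>b\<in>UNIV. (symm M $ a $ b)\<^sup>2)"
  unfolding ddot_def by (simp add: power2_eq_square)

lemma trace_symm: "trace M = (\<Sum>a\<in>UNIV. symm M $ a $ a)"
  unfolding trace_def symm_def by simp

lemma tr_le: "(trace (M::real^'d^'d))\<^sup>2 \<le> real CARD('d) * ddot (symm M) (symm M)"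
proof -
  have "(trace M)\<^sup>2 \<le> (\<Sum>a\<in>UNIV. (symm M $ a $ a)\<^sup>2) * real CARD('d)"
    unfolding trace_symm by (rule sum_squared_le_sum_of_squares)
  also have "(\<Sum>a\<in>UNIV. (symm M $ a $ a)\<^sup>2) \<le> ddot (symm M) (symm M)"
    unfolding ddot_self
    by (intro sum_mono member_le_sum) auto
  finally show ?thesis by (simp add: mult.commute mult_left_mono)
qed

lemma bform_nonneg:
  assumes "mu \<ge> 0" "lam \<ge> 0"
  shows "0 \<le> bform mu lam M M"
proof -
  have "bform mu lam M M = 2 * mu * (\<Sum>a\<in>UNIV. \<Sum>b\<in>UNIV. (symm M $ a $ b)\<^sup>2) + lam * (trace M)\<^sup>2"
    unfolding bform_def ddot_self by (simp add: power2_eq_square)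
  also have "\<dots> \<ge> 0" using assms
    by (intro add_nonneg_nonneg mult_nonneg_nonneg sum_nonneg) auto
  finally show ?thesis .
qed

lemma bform_tr:
  fixes M :: "real^'d^'d"
  assumes "mu \<ge> 0" "lam \<ge> 0"
  shows "(lam + 2 * mu / real CARD('d)) * (trace M)\<^sup>2 \<le> bform mu lam M M"
proof -
  have "2 * mu / real CARD('d) * (trace M)\<^sup>2 \<le> 2 * mu / real CARD('d) * (real CARD('d) * ddot (symm M) (symm M))"
    using tr_le[of M] assms by (intro mult_left_mono) auto
  also have "\<dots> = 2 * mu * ddot (symm M) (symm M)" by simp
  finally show ?thesis unfolding bform_def by (simp add: power2_eq_square algebra_simps)
qed

lemma sq_sum_le: "(\<Sum>i\<in>I. f i)\<^sup>2 \<le> real (card I) * (\<Sum>i\<in>I. (f i)\<^sup>2)"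
  using sum_squared_le_sum_of_squares[of f I] by (simp add: mult.commute)

lemma bform_card:
  fixes A :: "'i \<Rightarrow> real^'d^'d"
  assumes "mu \<ge> 0" "lam \<ge> 0"
  shows "bform mu lam (\<Sum>i\<in>I. A i) (\<Sum>i\<in>I. A i) \<le> real (card I) * (\<Sum>i\<in>I. bform mu lam (A i) (A i))"
proof -
  have d: "ddot (symm (\<Sum>i\<in>I. A i)) (symm (\<Sum>i\<in>I. A i)) \<le> real (card I) * (\<Sum>i\<in>I. ddot (symm (A i)) (symm (A i)))"
  proof -
    have "ddot (symm (\<Sum>i\<in>I. A i)) (symm (\<Sum>i\<in>I. A i)) = (\<Sum>a\<in>UNIV. \<Sum>b\<in>UNIV. (\<Sum>i\<in>I. symm (A i) $ a $ b)\<^sup>2)"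
      unfolding ddot_self symm_sum ..
    also have "\<dots> \<le> (\<Sum>a\<in>UNIV. \<Sum>b\<in>UNIV. real (card I) * (\<Sum>i\<in>I. (symm (A i) $ a $ b)\<^sup>2))"
      by (intro sum_mono sq_sum_le)
    also have "\<dots> = real (card I) * (\<Sum>i\<in>I. ddot (symm (A i)) (symm (A i)))"
      unfolding ddot_self by (simp add: sum_distrib_left sum.swap[of _ I])
    finally show ?thesis .
  qed
  have t: "(trace (\<Sum>i\<in>I. A i))\<^sup>2 \<le> real (card I) * (\<Sum>i\<in>I. (trace (A i))\<^sup>2)"
    unfolding trace_sum by (rule sq_sum_le)
  have "bform mu lam (\<Sum>i\<in>I. A i) (\<Sum>i\<in>I. A i) = 2 * mu * ddot (symm (\<Sum>i\<in>I. A i)) (symm (\<Sum>i\<in>I. A i)) + lam * (trace (\<Sum>i\<in>I. A i))\<^sup>2"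
    unfolding bform_def by (simp add: power2_eq_square)
  also have "\<dots> \<le> 2 * mu * (real (card I) * (\<Sum>i\<in>I. ddot (symm (A i)) (symm (A i)))) + lam * (real (card I) * (\<Sum>i\<in>I. (trace (A i))\<^sup>2))"
    using d t assms by (intro add_mono mult_left_mono) auto
  also have "\<dots> = real (card I) * (\<Sum>i\<in>I. bform mu lam (A i) (A i))"
    unfolding bform_def by (simp add: sum.distrib sum_distrib_left power2_eq_square algebra_simps)
  finally show ?thesis .
qed

lemma bform_sum:
  "bform mu lam (\<Sum>i\<in>I. c i *\<^sub>R A i) (\<Sum>j\<in>I. d j *\<^sub>R B j) =
     (\<Sum>i\<in>I. \<Sum>j\<in>I. c i * d j * bform mu lam (A i) (B j))"
proof -
  have "bform mu lam (\<Sum>i\<in>I. c i *\<^sub>R A i) (\<Sum>j\<in>I. d j *\<^sub>R B j) =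
     (\<Sum>(i,j)\<in>I \<times> I. bform mu lam (c i *\<^sub>R A i) (d j *\<^sub>R B j))"
    by (rule bilinear_sum[OF bform_bilinear])
  also have "\<dots> = (\<Sum>i\<in>I. \<Sum>j\<in>I. bform mu lam (c i *\<^sub>R A i) (d j *\<^sub>R B j))"
    by (rule sum.cartesian_product[symmetric])
  also have "\<dots> = (\<Sum>i\<in>I. \<Sum>j\<in>I. c i * d j * bform mu lam (A i) (B j))"
    by (simp add: bilinear_lmul[OF bform_bilinear] bilinear_rmul[OF bform_bilinear] mult_ac)
  finally show ?thesis .
qed



definition Mt :: "(real^'d) set \<Rightarrow> ((real^'d) set \<Rightarrow> real^'d) \<Rightarrow> (real^'d) set set \<Rightarrow> ((real^'d) set \<Rightarrow> real) \<Rightarrow> real^'d \<Rightarrow> real^'d^'d" where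
  "Mt T nF Fs xb y = (\<Sum>F\<in>Fs. xb F *\<^sub>R Phi T nF F y)"

lemma Mt_cont:
  fixes T :: "(real^'d) set"
  assumes "finite T" "card T = CARD('d) + 1" "\<not> affine_dependent T"
  shows "continuous_on UNIV (Mt T nF Fs xb)"
  unfolding Mt_def using Phi_cont[OF assms]
  by (intro continuous_intros) auto

lemma int_sum2:
  fixes f :: "'i \<Rightarrow> 'i \<Rightarrow> real^'d \<Rightarrow> real"
  assumes "finite I" "\<And>i j. i \<in> I \<Longrightarrow> j \<in> I \<Longrightarrow> f i j integrable_on S"
  shows "integral S (\<lambda>y. \<Sum>i\<in>I. \<Sum>j\<in>I. k i j * f i j y) = (\<Sum>i\<in>I. \<Sum>j\<in>I. k i j * integral S (f i j))"
proof -
  have ij: "(\<lambda>y. k i j * f i j y) integrable_on S" if "i \<in> I" "j \<in> I" for i j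
    using integrable_on_cmult_left[OF assms(2)[OF that], of "k i j"] by simp
  have i: "(\<lambda>y. \<Sum>j\<in>I. k i j * f i j y) integrable_on S" if "i \<in> I" for i
    using ij that assms(1) by (intro integrable_sum) auto
  have "integral S (\<lambda>y. \<Sum>i\<in>I. \<Sum>j\<in>I. k i j * f i j y) = (\<Sum>i\<in>I. integral S (\<lambda>y. \<Sum>j\<in>I. k i j * f i j y))"
    using i assms(1) by (intro Henstock_Kurzweil_Integration.integral_sum) auto
  also have "\<dots> = (\<Sum>i\<in>I. \<Sum>j\<in>I. integral S (\<lambda>y. k i j * f i j y))"
    using ij assms(1) by (intro sum.cong refl Henstock_Kurzweil_Integration.integral_sum) auto
  also have "\<dots> = (\<Sum>i\<in>I. \<Sum>j\<in>I. k i j * integral S (f i j))"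
    by (simp add: Henstock_Kurzweil_Integration.integral_mult_right)
  finally show ?thesis .
qed

lemma quadA:
  fixes Th :: "(real^'d) set set"
  assumes mesh: "simplicial_mesh Th" and fin: "finite Fs"
  shows "(\<Sum>F\<in>Fs. matvec (Abb mu lam Th nF) Fs xb F * xb F) =
     (\<Sum>T\<in>Th. integral (convex hull T) (\<lambda>y. bform mu lam (Mt T nF Fs xb y) (Mt T nF Fs xb y)))"
proof -
  let ?I = "\<lambda>T G F. integral (convex hull T) (\<lambda>y. bform mu lam (Phi T nF G y) (Phi T nF F y))"
  have e: "integral (convex hull T) (\<lambda>y. bform mu lam (Mt T nF Fs xb y) (Mt T nF Fs xb y)) =
      (\<Sum>G\<in>Fs. \<Sum>F\<in>Fs. xb G * xb F * ?I T G F)" if T: "T \<in> Th" for T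
  proof -
    note el = mesh_elem[OF mesh T]
    have "integral (convex hull T) (\<lambda>y. bform mu lam (Mt T nF Fs xb y) (Mt T nF Fs xb y)) =
       integral (convex hull T) (\<lambda>y. \<Sum>G\<in>Fs. \<Sum>F\<in>Fs. xb G * xb F * bform mu lam (Phi T nF G y) (Phi T nF F y))"
      unfolding Mt_def bform_sum ..
    also have "\<dots> = (\<Sum>G\<in>Fs. \<Sum>F\<in>Fs. xb G * xb F * ?I T G F)"
      using fin
      by (intro int_sum2 cont_integrable[OF el(1)] cont_bform Phi_cont[OF el]) auto
    finally show ?thesis .
  qed
  have "(\<Sum>F\<in>Fs. matvec (Abb mu lam Th nF) Fs xb F * xb F) =
      (\<Sum>F\<in>Fs. \<Sum>G\<in>Fs. \<Sum>T\<in>Th. xb G * xb F * ?I T G F)"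
    unfolding matvec_def Abb_decomp[OF mesh]
    by (simp add: sum_distrib_left sum_distrib_right mult_ac)
  also have "\<dots> = (\<Sum>G\<in>Fs. \<Sum>F\<in>Fs. \<Sum>T\<in>Th. xb G * xb F * ?I T G F)"
    by (rule sum.swap)
  also have "\<dots> = (\<Sum>G\<in>Fs. \<Sum>T\<in>Th. \<Sum>F\<in>Fs. xb G * xb F * ?I T G F)"
    by (intro sum.cong refl sum.swap)
  also have "\<dots> = (\<Sum>T\<in>Th. \<Sum>G\<in>Fs. \<Sum>F\<in>Fs. xb G * xb F * ?I T G F)"
    by (rule sum.swap)
  also have "\<dots> = (\<Sum>T\<in>Th. integral (convex hull T) (\<lambda>y. bform mu lam (Mt T nF Fs xb y) (Mt T nF Fs xb y)))"
    using e by simp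
  finally show ?thesis .
qed

lemma Bx_eq:
  fixes Th :: "(real^'d) set set"
  assumes mesh: "simplicial_mesh Th" and fin: "finite Fs" and T0: "T0 \<in> Th"
  shows "matvec (Bb Th nF) Fs xb T0 = - integral (convex hull T0) (\<lambda>y. trace (Mt T0 nF Fs xb y))"
proof -
  note el = mesh_elem[OF mesh T0]
  have "integral (convex hull T0) (\<lambda>y. trace (Mt T0 nF Fs xb y)) =
     integral (convex hull T0) (\<lambda>y. \<Sum>F\<in>Fs. xb F * trace (Phi T0 nF F y))"
    unfolding Mt_def trace_sum trace_scale ..
  also have "\<dots> = (\<Sum>F\<in>Fs. integral (convex hull T0) (\<lambda>y. xb F * trace (Phi T0 nF F y)))"
    using fin
    by (intro Henstock_Kurzweil_Integration.integral_sum cont_integrable[OF el(1)]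
         continuous_intros cont_trace Phi_cont[OF el]) auto
  also have "\<dots> = (\<Sum>F\<in>Fs. xb F * integral (convex hull T0) (\<lambda>y. trace (Phi T0 nF F y)))"
    by (simp add: Henstock_Kurzweil_Integration.integral_mult_right)
  finally show ?thesis
    unfolding matvec_def Bb_decomp[OF mesh T0]
    by (simp add: sum_negf mult.commute)
qed

lemma quadMp:
  fixes Th :: "(real^'d) set set"
  assumes "finite Th"
  shows "(\<Sum>T\<in>Th. matvec Mp_inv Th v T * v T) = (\<Sum>T\<in>Th. (v T)\<^sup>2 / measure lebesgue (convex hull T))"
proof (rule sum.cong[OF refl])
  fix T assume T: "T \<in> Th"
  have "matvec Mp_inv Th v T = (\<Sum>T'\<in>Th. if T = T' then v T' / measure lebesgue (convex hull T) else 0)"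
    unfolding matvec_def Mp_inv_def by (intro sum.cong) auto
  also have "\<dots> = v T / measure lebesgue (convex hull T)"
    using assms T by (simp add: sum.delta)
  finally show "matvec Mp_inv Th v T * v T = (v T)\<^sup>2 / measure lebesgue (convex hull T)"
    by (simp add: power2_eq_square)
qed

lemma jensen:
  fixes f :: "real^'d \<Rightarrow> real" and T :: "(real^'d) set"
  assumes fT: "finite T" and c: "continuous_on UNIV f"
  shows "(integral (convex hull T) f)\<^sup>2 / measure lebesgue (convex hull T) \<le> integral (convex hull T) (\<lambda>y. (f y)\<^sup>2)"
proof -
  let ?S = "convex hull T"
  let ?m = "measure lebesgue ?S"
  let ?I = "integral ?S f"
  have lm: "?S \<in> lmeasurable" using fT by (intro lmeasurable_compact compact_convex_hull finite_imp_compact)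
  have m: "?m = integral ?S (\<lambda>x. 1)" by (rule lmeasure_integral[OF lm])
  have fi: "f integrable_on ?S" by (rule cont_integrable[OF fT c])
  have f2i: "(\<lambda>y. (f y)\<^sup>2) integrable_on ?S" by (rule cont_integrable[OF fT]) (intro continuous_intros c)
  have onei: "(\<lambda>y. 1::real) integrable_on ?S" by (rule integrable_on_const[OF lm])
  have nn: "0 \<le> integral ?S (\<lambda>y. (f y)\<^sup>2)"
    by (rule Henstock_Kurzweil_Integration.integral_nonneg[OF f2i]) auto
  show ?thesis
  proof (cases "?m = 0")
    case True then show ?thesis using nn by simp
  next
    case False
    then have mpos: "?m > 0" using measure_nonneg[of lebesgue ?S] by linarith
    define a where "a = ?I / ?m"
    have gi: "(\<lambda>y. (f y - a)\<^sup>2) integrable_on ?S"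
      by (rule cont_integrable[OF fT]) (intro continuous_intros c)
    have "0 \<le> integral ?S (\<lambda>y. (f y - a)\<^sup>2)"
      by (rule Henstock_Kurzweil_Integration.integral_nonneg[OF gi]) auto
    also have "integral ?S (\<lambda>y. (f y - a)\<^sup>2) = integral ?S (\<lambda>y. (f y)\<^sup>2 - 2 * a * f y + a\<^sup>2 * 1)"
      by (simp add: power2_eq_square algebra_simps)
    also have "\<dots> = integral ?S (\<lambda>y. (f y)\<^sup>2) - 2 * a * ?I + a\<^sup>2 * ?m"
    proof -
      have i1: "(\<lambda>y. 2 * a * f y) integrable_on ?S" using integrable_on_cmult_left[OF fi, of "2*a"] by simp
      have i2: "(\<lambda>y. a\<^sup>2 * 1) integrable_on ?S" using integrable_on_cmult_left[OF onei, of "a\<^sup>2"] by simp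
      have "integral ?S (\<lambda>y. (f y)\<^sup>2 - 2 * a * f y + a\<^sup>2 * 1) =
          integral ?S (\<lambda>y. (f y)\<^sup>2 - 2 * a * f y) + integral ?S (\<lambda>y. a\<^sup>2 * 1)"
        by (rule integral_add[OF integrable_diff[OF f2i i1] i2])
      also have "\<dots> = integral ?S (\<lambda>y. (f y)\<^sup>2) - integral ?S (\<lambda>y. 2 * a * f y) + integral ?S (\<lambda>y. a\<^sup>2 * 1)"
        by (simp add: integral_diff[OF f2i i1])
      finally show ?thesis unfolding m
        by (simp only: Henstock_Kurzweil_Integration.integral_mult_right)
    qed
    finally have "0 \<le> integral ?S (\<lambda>y. (f y)\<^sup>2) - 2 * a * ?I + a\<^sup>2 * ?m" .
    moreover have "2 * a * ?I - a\<^sup>2 * ?m = ?I\<^sup>2 / ?m"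
      unfolding a_def using mpos by (simp add: field_simps power2_eq_square)
    ultimately show ?thesis by linarith
  qed
qed



lemma mesh_faces_finite:
  fixes Th :: "(real^'d) set set"
  assumes mesh: "simplicial_mesh Th"
  shows "finite (mesh_faces Th)"
proof -
  have fin: "finite Th" using mesh unfolding simplicial_mesh_def by auto
  have "mesh_faces Th \<subseteq> (\<Union>T\<in>Th. Pow T)" unfolding mesh_faces_def by auto
  moreover have "finite (\<Union>T\<in>Th. Pow T)" using fin mesh_elem(1)[OF mesh] by auto
  ultimately show ?thesis by (rule finite_subset)
qed

lemma Phi_zero: "\<not> F \<subseteq> T \<Longrightarrow> Phi T nF F y = 0"
  by (simp add: vec_eq_iff Phi_entry)

lemma faces_card:
  fixes Th :: "(real^'d) set set"
  assumes mesh: "simplicial_mesh Th" and T: "T \<in> Th" and faces: "Fs \<subseteq> mesh_faces Th"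
  shows "card {F\<in>Fs. F \<subseteq> T} \<le> CARD('d) + 1"
proof -
  note el = mesh_elem[OF mesh T]
  have "{F\<in>Fs. F \<subseteq> T} \<subseteq> {B. B \<subseteq> T \<and> card B = CARD('d)}"
    using faces unfolding mesh_faces_def by auto
  moreover have "finite {B. B \<subseteq> T \<and> card B = CARD('d)}" using el(1) by auto
  ultimately have "card {F\<in>Fs. F \<subseteq> T} \<le> card {B. B \<subseteq> T \<and> card B = CARD('d)}"
    by (rule card_mono[rotated])
  also have "\<dots> = card T choose CARD('d)" by (rule n_subsets[OF el(1)])
  also have "\<dots> = CARD('d) + 1" using el(2) by simp
  finally show ?thesis .
qed

lemma pointwise_D:
  fixes Th :: "(real^'d) set set"
  assumes mesh: "simplicial_mesh Th" and T: "T \<in> Th" and faces: "Fs \<subseteq> mesh_faces Th"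
    and fin: "finite Fs" and mu: "mu \<ge> 0" and lam: "lam \<ge> 0"
  shows "bform mu lam (Mt T nF Fs xb y) (Mt T nF Fs xb y) \<le>
     (real CARD('d) + 1) * (\<Sum>F\<in>Fs. (xb F * xb F) * bform mu lam (Phi T nF F y) (Phi T nF F y))"
proof -
  let ?I = "{F\<in>Fs. F \<subseteq> T}"
  let ?A = "\<lambda>F. xb F *\<^sub>R Phi T nF F y"
  have finI: "finite ?I" using fin by auto
  have M: "Mt T nF Fs xb y = (\<Sum>F\<in>?I. ?A F)"
    unfolding Mt_def using fin
    by (intro sum.mono_neutral_right) (auto simp: Phi_zero)
  have bs: "bform mu lam (?A F) (?A F) = (xb F * xb F) * bform mu lam (Phi T nF F y) (Phi T nF F y)" for F
    by (simp add: bilinear_lmul[OF bform_bilinear] bilinear_rmul[OF bform_bilinear])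
  have S: "(\<Sum>F\<in>?I. bform mu lam (?A F) (?A F)) =
      (\<Sum>F\<in>Fs. (xb F * xb F) * bform mu lam (Phi T nF F y) (Phi T nF F y))"
    unfolding bs using fin
    by (intro sum.mono_neutral_left) (auto simp: Phi_zero bform_def ddot_def symm_def trace_def)
  have nn: "0 \<le> (\<Sum>F\<in>Fs. (xb F * xb F) * bform mu lam (Phi T nF F y) (Phi T nF F y))"
    by (intro sum_nonneg mult_nonneg_nonneg[OF zero_le_square bform_nonneg[OF mu lam]])
  have "bform mu lam (Mt T nF Fs xb y) (Mt T nF Fs xb y) \<le> real (card ?I) * (\<Sum>F\<in>?I. bform mu lam (?A F) (?A F))"
    unfolding M by (rule bform_card[OF mu lam])
  also have "\<dots> = real (card ?I) * (\<Sum>F\<in>Fs. (xb F * xb F) * bform mu lam (Phi T nF F y) (Phi T nF F y))"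
    unfolding S ..
  also have "\<dots> \<le> (real CARD('d) + 1) * (\<Sum>F\<in>Fs. (xb F * xb F) * bform mu lam (Phi T nF F y) (Phi T nF F y))"
    using faces_card[OF mesh T faces] nn by (intro mult_right_mono) auto
  finally show ?thesis .
qed



theorem corollaryA2:
  fixes Th :: "(real^'d) set set" and Fs :: "(real^'d) set set"
    and nF :: "(real^'d) set \<Rightarrow> real^'d"
    and mu lam :: real and xb :: "(real^'d) set \<Rightarrow> real"
  assumes dim: "CARD('d) = 2 \<or> CARD('d) = 3"
    and mesh: "simplicial_mesh Th"
    and faces: "Fs \<subseteq> mesh_faces Th"
    and normals: "\<forall>F\<in>Fs. norm (nF F) = 1 \<and> (\<forall>p\<in>F. \<forall>q\<in>F. nF F \<bullet> (p - q) = 0)"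
    and mu: "mu > 0" and lam: "lam \<ge> 0"
  shows "hnorm Mp_inv Th (matvec (Bb Th nF) Fs xb)
           \<le> (1 / sqrt (lam + 2 * mu / real CARD('d))) * hnorm (Abb mu lam Th nF) Fs xb
       \<and> (1 / sqrt (lam + 2 * mu / real CARD('d))) * hnorm (Abb mu lam Th nF) Fs xb
           \<le> (1 / sqrt (lam + 2 * mu / real CARD('d))) * hnorm (Dbb mu lam Th nF) Fs xb"
proof -
  have finTh: "finite Th" using mesh unfolding simplicial_mesh_def by auto
  have fin: "finite Fs" using finite_subset[OF faces mesh_faces_finite[OF mesh]] .
  have mu0: "mu \<ge> 0" using mu by simp
  define c where "c = lam + 2 * mu / real CARD('d)"
  have cpos: "c > 0" unfolding c_def using mu lam by (simp add: add_nonneg_pos)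
  let ?M = "\<lambda>T. Mt T nF Fs xb"
  let ?QA = "\<Sum>F\<in>Fs. matvec (Abb mu lam Th nF) Fs xb F * xb F"
  let ?QD = "\<Sum>F\<in>Fs. matvec (Dbb mu lam Th nF) Fs xb F * xb F"
  let ?QB = "\<Sum>T\<in>Th. matvec Mp_inv Th (matvec (Bb Th nF) Fs xb) T * matvec (Bb Th nF) Fs xb T"
  have QA: "?QA = (\<Sum>T\<in>Th. integral (convex hull T) (\<lambda>y. bform mu lam (?M T y) (?M T y)))"
    by (rule quadA[OF mesh fin])
  have bi: "(\<lambda>y. bform mu lam (?M T y) (?M T y)) integrable_on convex hull T" if "T \<in> Th" for T
    using mesh_elem[OF mesh that]
    by (intro cont_integrable cont_bform Mt_cont) auto
  have QB: "?QB \<le> ?QA / c"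
  proof -
    have "?QB = (\<Sum>T\<in>Th. (matvec (Bb Th nF) Fs xb T)\<^sup>2 / measure lebesgue (convex hull T))"
      by (rule quadMp[OF finTh])
    also have "\<dots> = (\<Sum>T\<in>Th. (integral (convex hull T) (\<lambda>y. trace (?M T y)))\<^sup>2 / measure lebesgue (convex hull T))"
      using Bx_eq[OF mesh fin] by (intro sum.cong refl) simp
    also have "\<dots> \<le> (\<Sum>T\<in>Th. integral (convex hull T) (\<lambda>y. (trace (?M T y))\<^sup>2))"
    proof (rule sum_mono)
      fix T assume "T \<in> Th"
      note el = mesh_elem[OF mesh this]
      show "(integral (convex hull T) (\<lambda>y. trace (?M T y)))\<^sup>2 / measure lebesgue (convex hull T)
            \<le> integral (convex hull T) (\<lambda>y. (trace (?M T y))\<^sup>2)"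
        by (rule jensen[OF el(1) cont_trace[OF Mt_cont[OF el]]])
    qed
    also have "\<dots> \<le> (\<Sum>T\<in>Th. integral (convex hull T) (\<lambda>y. (1 / c) * bform mu lam (?M T y) (?M T y)))"
    proof (rule sum_mono)
      fix T assume T: "T \<in> Th"
      note el = mesh_elem[OF mesh T]
      show "integral (convex hull T) (\<lambda>y. (trace (?M T y))\<^sup>2)
            \<le> integral (convex hull T) (\<lambda>y. (1 / c) * bform mu lam (?M T y) (?M T y))"
      proof (rule integral_le)
        show "(\<lambda>y. (trace (?M T y))\<^sup>2) integrable_on convex hull T"
          by (rule cont_integrable[OF el(1)]) (intro continuous_intros cont_trace Mt_cont[OF el])
        show "(\<lambda>y. (1 / c) * bform mu lam (?M T y) (?M T y)) integrable_on convex hull T"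
          using integrable_on_cmult_left[OF bi[OF T], of "1/c"] by simp
        fix y
        have "c * (trace (?M T y))\<^sup>2 \<le> bform mu lam (?M T y) (?M T y)"
          unfolding c_def by (rule bform_tr[OF mu0 lam])
        then show "(trace (?M T y))\<^sup>2 \<le> (1 / c) * bform mu lam (?M T y) (?M T y)"
          using cpos by (simp add: field_simps)
      qed
    qed
    also have "\<dots> = ?QA / c"
      unfolding QA by (simp add: Henstock_Kurzweil_Integration.integral_mult_right sum_divide_distrib)
    finally show ?thesis .
  qed
  have QBnn: "0 \<le> ?QB"
    unfolding quadMp[OF finTh] by (intro sum_nonneg divide_nonneg_nonneg) auto
  have first: "hnorm Mp_inv Th (matvec (Bb Th nF) Fs xb) \<le> (1 / sqrt c) * hnorm (Abb mu lam Th nF) Fs xb"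
  proof -
    have "hnorm Mp_inv Th (matvec (Bb Th nF) Fs xb) = sqrt ?QB" unfolding hnorm_def ..
    also have "\<dots> \<le> sqrt (?QA / c)" using QB by (rule real_sqrt_le_mono)
    also have "\<dots> = (1 / sqrt c) * sqrt ?QA" by (simp add: real_sqrt_divide)
    also have "\<dots> = (1 / sqrt c) * hnorm (Abb mu lam Th nF) Fs xb" unfolding hnorm_def ..
    finally show ?thesis .
  qed
  have QAD: "?QA \<le> ?QD"
  proof -
    let ?J = "\<lambda>T F. integral (convex hull T) (\<lambda>y. bform mu lam (Phi T nF F y) (Phi T nF F y))"
    have "?QA \<le> (\<Sum>T\<in>Th. integral (convex hull T)
        (\<lambda>y. \<Sum>F\<in>Fs. ((real CARD('d) + 1) * (xb F * xb F)) * bform mu lam (Phi T nF F y) (Phi T nF F y)))"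
      unfolding QA
    proof (rule sum_mono)
      fix T assume T: "T \<in> Th"
      note el = mesh_elem[OF mesh T]
      show "integral (convex hull T) (\<lambda>y. bform mu lam (?M T y) (?M T y))
          \<le> integral (convex hull T) (\<lambda>y. \<Sum>F\<in>Fs. ((real CARD('d) + 1) * (xb F * xb F)) * bform mu lam (Phi T nF F y) (Phi T nF F y))"
      proof (rule integral_le[OF bi[OF T]])
        show "(\<lambda>y. \<Sum>F\<in>Fs. ((real CARD('d) + 1) * (xb F * xb F)) * bform mu lam (Phi T nF F y) (Phi T nF F y)) integrable_on convex hull T"
          by (rule cont_integrable[OF el(1)]) (intro continuous_intros cont_bform Phi_cont[OF el])
        fix y
        show "bform mu lam (?M T y) (?M T y) \<le> (\<Sum>F\<in>Fs. ((real CARD('d) + 1) * (xb F * xb F)) * bform mu lam (Phi T nF F y) (Phi T nF F y))"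
          using pointwise_D[OF mesh T faces fin mu0 lam, of nF xb y]
          by (simp add: sum_distrib_left mult_ac)
      qed
    qed
    also have "\<dots> = (\<Sum>T\<in>Th. \<Sum>F\<in>Fs. ((real CARD('d) + 1) * (xb F * xb F)) * ?J T F)"
    proof (rule sum.cong[OF refl])
      fix T assume T: "T \<in> Th"
      note el = mesh_elem[OF mesh T]
      show "integral (convex hull T) (\<lambda>y. \<Sum>F\<in>Fs. ((real CARD('d) + 1) * (xb F * xb F)) * bform mu lam (Phi T nF F y) (Phi T nF F y))
          = (\<Sum>F\<in>Fs. ((real CARD('d) + 1) * (xb F * xb F)) * ?J T F)"
        using fin
        by (subst Henstock_Kurzweil_Integration.integral_sum)
           (auto intro!: integrable_on_cmult_left[OF cont_integrable[OF el(1)], simplified]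
              cont_bform Phi_cont[OF el] simp: Henstock_Kurzweil_Integration.integral_mult_right)
    qed
    also have "\<dots> = (\<Sum>F\<in>Fs. \<Sum>T\<in>Th. ((real CARD('d) + 1) * (xb F * xb F)) * ?J T F)"
      by (rule sum.swap)
    also have "\<dots> = ?QD"
    proof (rule sum.cong[OF refl])
      fix F assume F: "F \<in> Fs"
      have "matvec (Dbb mu lam Th nF) Fs xb F = (\<Sum>G\<in>Fs. if F = G then (real CARD('d) + 1) * Abb mu lam Th nF F F * xb F else 0)"
        unfolding matvec_def Dbb_def by (intro sum.cong) auto
      also have "\<dots> = (real CARD('d) + 1) * Abb mu lam Th nF F F * xb F"
        using fin F by (simp add: sum.delta)
      finally show "(\<Sum>T\<in>Th. ((real CARD('d) + 1) * (xb F * xb F)) * ?J T F) = matvec (Dbb mu lam Th nF) Fs xb F * xb F"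
        unfolding Abb_decomp[OF mesh] by (simp add: sum_distrib_left mult_ac)
    qed
    finally show ?thesis .
  qed
  have second: "(1 / sqrt c) * hnorm (Abb mu lam Th nF) Fs xb \<le> (1 / sqrt c) * hnorm (Dbb mu lam Th nF) Fs xb"
    unfolding hnorm_def using QAD cpos by (intro mult_left_mono real_sqrt_le_mono) auto
  show ?thesis using first second unfolding c_def by simp
qed

end
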